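(* Let $X$ be a nondegenerate dendrite and $h:X\to X$ a homeomorphism. If $h$ fixes an end point $e$ of $X$, then $h$ fixes some point $o\in X$ with $o\neq e$.
   Context: A dendrite is a locally connected continuum (compact connected metrizable space) containing no simple closed curve; nondegenerate means it has more than one point. An end point of a dendrite $X$ is a point $x$ such that $X\setminus\{x\}$ is connected (i.e. $x$ has order one). *)

theory Defs
  imports "HOL-Analysis.Analysis"
begin

definition continuum :: "'a topology \<Rightarrow> bool" where
  "continuum X \<longleftrightarrow> compact_space X \<and> connected_space X \<and> metrizable_space X"

definition simple_closed_curve_in :: "'a topology \<Rightarrow> 'a set \<Rightarrow> bool" where
  "simple_closed_curve_in X S \<longleftrightarrow> S \<subseteq> topspace X \<and>
     (subtopology X S) homeomorphic_space (top_of_set (sphere (0::complex) 1))"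

definition dendrite :: "'a topology \<Rightarrow> bool" where
  "dendrite X \<longleftrightarrow> continuum X \<and> locally_connected_space X \<and>
     \<not> (\<exists>S. simple_closed_curve_in X S)"

definition end_point :: "'a topology \<Rightarrow> 'a \<Rightarrow> bool" where
  "end_point X x \<longleftrightarrow> x \<in> topspace X \<and> connectedin X (topspace X - {x})"

end

theory Submission
  imports Defs "HOL-Probability.Discrete_Topology"
begin

lemma ulc:
  fixes S :: "'v::metric_space set"
  assumes "compact S" "locally connected S" "\<epsilon> > 0"
  obtains \<delta> where "\<delta> > 0"
    "\<And>x y. x \<in> S \<Longrightarrow> y \<in> S \<Longrightarrow> dist x y < \<delta> \<Longrightarrow>
        \<exists>C. connected C \<and> C \<subseteq> S \<and> x \<in> C \<and> y \<in> C \<and> C \<subseteq> ball x \<epsilon>"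
proof -
  have "\<exists>U. open U \<and> z \<in> U \<and> connected (S \<inter> U) \<and> S \<inter> U \<subseteq> ball z (\<epsilon>/2)" if "z \<in> S" for z
  proof -
    have "openin (top_of_set S) (S \<inter> ball z (\<epsilon>/2))"
      by (simp add: openin_open_Int)
    moreover have "z \<in> S \<inter> ball z (\<epsilon>/2)" using that assms by auto
    ultimately obtain u where u: "openin (top_of_set S) u" "connected u" "z \<in> u" "u \<subseteq> S \<inter> ball z (\<epsilon>/2)"
      using assms(2) unfolding locally_connected by blast
    then obtain U where "open U" "u = S \<inter> U" by (auto simp: openin_open)
    then show ?thesis using u by auto
  qed
  then obtain U where U: "\<And>z. z \<in> S \<Longrightarrow> open (U z) \<and> z \<in> U z \<and> connected (S \<inter> U z) \<and> S \<inter> U z \<subseteq> ball z (\<epsilon>/2)"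
    by metis
  have "S \<subseteq> \<Union> (U ` S)" using U by blast
  then obtain \<delta> where d: "\<delta> > 0" "\<And>x. x \<in> S \<Longrightarrow> \<exists>G \<in> U ` S. ball x \<delta> \<subseteq> G"
    using Heine_Borel_lemma[OF assms(1), of "U ` S"] U by blast
  show thesis
  proof (rule that[OF d(1)])
    fix x y assume xy: "x \<in> S" "y \<in> S" "dist x y < \<delta>"
    then obtain z where z: "z \<in> S" "ball x \<delta> \<subseteq> U z" using d by blast
    have "x \<in> U z" "y \<in> U z" using z xy d(1) by auto
    moreover have "S \<inter> U z \<subseteq> ball x \<epsilon>"
    proof
      fix w assume "w \<in> S \<inter> U z"
      then have "dist z w < \<epsilon>/2" using U[OF z(1)] by auto
      moreover have "dist z x < \<epsilon>/2" using U[OF z(1)] xy \<open>x \<in> U z\<close> by auto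
      ultimately show "w \<in> ball x \<epsilon>" by (simp add: dist_commute) (smt (verit) dist_triangle2)
    qed
    ultimately show "\<exists>C. connected C \<and> C \<subseteq> S \<and> x \<in> C \<and> y \<in> C \<and> C \<subseteq> ball x \<epsilon>"
      using U[OF z(1)] xy by (intro exI[of _ "S \<inter> U z"]) auto
  qed
qed

lemma chain_exists:
  fixes C :: "'v::metric_space set"
  assumes "connected C" "x \<in> C" "y \<in> C" "\<delta> > 0"
  shows "\<exists>c M. c 0 = x \<and> (\<forall>j\<ge>M. c j = y) \<and> (\<forall>j. c j \<in> C) \<and> (\<forall>j. dist (c j) (c (Suc j)) < \<delta>)"
proof -
  define R where "R = {z\<in>C. \<exists>c M. c 0 = x \<and> (\<forall>j\<ge>M. c j = z) \<and> (\<forall>j. c j \<in> C) \<and> (\<forall>j. dist (c j) (c (Suc j)) < \<delta>)}"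
  have ext: "w \<in> R" if zw: "z \<in> R" "w \<in> C" "dist z w < \<delta>" for z w
  proof -
    obtain c M where c: "c 0 = x" "\<forall>j\<ge>M. c j = z" "\<forall>j. c j \<in> C" "\<forall>j. dist (c j) (c (Suc j)) < \<delta>"
      using zw R_def by blast
    define c' where "c' j = (if j \<le> M then c j else w)" for j
    have "c' 0 = x" using c by (simp add: c'_def)
    moreover have "\<forall>j\<ge>Suc M. c' j = w" by (simp add: c'_def)
    moreover have "\<forall>j. c' j \<in> C" using c zw by (simp add: c'_def)
    moreover have "\<forall>j. dist (c' j) (c' (Suc j)) < \<delta>"
    proof
      fix j
      consider "Suc j \<le> M" | "j = M" | "j > M" by linarith
      then show "dist (c' j) (c' (Suc j)) < \<delta>"
        by cases (use c zw assms(4) in \<open>auto simp: c'_def\<close>)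
    qed
    ultimately show ?thesis using zw R_def by blast
  qed
  have xR: "x \<in> R"
    unfolding R_def using assms by (intro CollectI conjI exI[of _ "\<lambda>_. x"] exI[of _ 0]) auto
  define A where "A = (\<Union>z\<in>R. ball z \<delta>)"
  define B where "B = (\<Union>z\<in>C-R. ball z \<delta>)"
  have "open A" "open B" by (auto simp: A_def B_def)
  moreover have "C \<subseteq> A \<union> B"
  proof
    fix u assume "u \<in> C"
    then show "u \<in> A \<union> B" using assms(4)
      by (cases "u \<in> R") (auto simp: A_def B_def intro!: bexI[of _ u])
  qed
  moreover have "A \<inter> B \<inter> C = {}"
  proof (rule ccontr)
    assume "A \<inter> B \<inter> C \<noteq> {}"
    then obtain u where u: "u \<in> A" "u \<in> B" "u \<in> C" by blast
    then obtain z w where "z \<in> R" "w \<in> C - R" "dist z u < \<delta>" "dist w u < \<delta>"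
      by (auto simp: A_def B_def)
    then show False using ext u(3) by (metis DiffD2 DiffD1 dist_commute)
  qed
  moreover have "A \<inter> C \<noteq> {}" using xR assms unfolding A_def by (metis IntI UN_I centre_in_ball empty_iff)
  ultimately have "B \<inter> C = {}" using connectedD[OF assms(1)] by blast
  then have "y \<in> R" using assms(3,4) unfolding B_def by (metis DiffI IntI UN_I centre_in_ball empty_iff)
  then show ?thesis by (auto simp: R_def)
qed

lemma ulc_ex:
  fixes S :: "'v::metric_space set"
  assumes "compact S" "locally connected S" "\<epsilon> > 0"
  shows "\<exists>\<delta>>0. \<forall>x y. x \<in> S \<longrightarrow> y \<in> S \<longrightarrow> dist x y < \<delta> \<longrightarrow>
        (\<exists>C. connected C \<and> C \<subseteq> S \<and> x \<in> C \<and> y \<in> C \<and> C \<subseteq> ball x \<epsilon>)"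
proof (rule ulc[OF assms])
  fix \<delta> :: real assume d: "\<delta> > 0" and H: "\<And>x y. x \<in> S \<Longrightarrow> y \<in> S \<Longrightarrow> dist x y < \<delta> \<Longrightarrow>
        \<exists>C. connected C \<and> C \<subseteq> S \<and> x \<in> C \<and> y \<in> C \<and> C \<subseteq> ball x \<epsilon>"
  show ?thesis using d H by (intro exI[of _ \<delta>]) auto
qed

lemma small_pow2:
  fixes C \<eta> :: real
  assumes "C > 0" "\<eta> > 0"
  shows "\<exists>n. C / 2^n < \<eta>"
proof -
  obtain n where "(1/2::real)^n < \<eta> / C"
    using real_arch_pow_inv[of "\<eta>/C" "1/2::real"] assms by auto
  then have "C * (1/2)^n < \<eta>" using assms by (simp add: field_simps)
  then show ?thesis by (auto simp: power_one_over field_simps)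
qed

lemma floor_div_pow:
  fixes t :: real
  assumes "t \<ge> 0" "n \<le> m"
  shows "nat \<lfloor>t * 2^m\<rfloor> div 2^(m-n) = nat \<lfloor>t * 2^n\<rfloor>"
proof -
  have p: "(2::real)^m = 2^n * 2^(m-n)" by (metis assms(2) le_add_diff_inverse power_add)
  have eq: "t * 2^m / real_of_int (2^(m-n)) = t * 2^n"
    unfolding p by simp
  have "\<lfloor>t * 2^m\<rfloor> div 2^(m-n) = \<lfloor>t * 2^n\<rfloor>"
    using floor_divide_real_eq_div[of "2^(m-n)" "t * 2^m"] eq by simp
  moreover have "nat (\<lfloor>t * 2^m\<rfloor> div 2^(m-n)) = nat \<lfloor>t * 2^m\<rfloor> div 2^(m-n)"
    using nat_div_distrib[of "\<lfloor>t * 2^m\<rfloor>" "2^(m-n)"] assms by (simp add: nat_power_eq)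
  ultimately show ?thesis by simp
qed

lemma floor_close:
  fixes s t N :: real
  assumes "\<bar>s - t\<bar> * N < 1" "N > 0" "s \<ge> 0" "t \<ge> 0"
  shows "nat \<lfloor>s * N\<rfloor> = nat \<lfloor>t * N\<rfloor> \<or> nat \<lfloor>s * N\<rfloor> = Suc (nat \<lfloor>t * N\<rfloor>) \<or> nat \<lfloor>t * N\<rfloor> = Suc (nat \<lfloor>s * N\<rfloor>)"
proof -
  have "\<bar>s*N - t*N\<bar> < 1" using assms by (simp add: abs_mult left_diff_distrib[symmetric])
  then have "\<bar>\<lfloor>s*N\<rfloor> - \<lfloor>t*N\<rfloor>\<bar> \<le> 1"
    by linarith
  moreover have "\<lfloor>s*N\<rfloor> \<ge> 0" "\<lfloor>t*N\<rfloor> \<ge> 0" using assms by auto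
  ultimately show ?thesis by linarith
qed

lemma local_path:
  fixes S :: "'v::complete_space set"
  assumes S: "compact S" "locally connected S" and "\<epsilon> > 0"
  obtains \<delta> where "\<delta> > 0" "\<And>a b. a \<in> S \<Longrightarrow> b \<in> S \<Longrightarrow> dist a b < \<delta> \<Longrightarrow>
      \<exists>p. path p \<and> pathstart p = a \<and> pathfinish p = b \<and> path_image p \<subseteq> S \<inter> ball a \<epsilon>"
proof -
  define e where "e n = \<epsilon> / 8 / 2^n" for n :: nat
  have epos: "e n > 0" for n using assms by (simp add: e_def)
  define G where "G n d \<longleftrightarrow> d > 0 \<and> d \<le> e n \<and> (\<forall>x y. x \<in> S \<longrightarrow> y \<in> S \<longrightarrow> dist x y < d \<longrightarrow>
           (\<exists>C. connected C \<and> C \<subseteq> S \<and> x \<in> C \<and> y \<in> C \<and> C \<subseteq> ball x (e n)))" for n d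
  have "\<exists>d. G n d" for n
  proof -
    obtain d where "d > 0" "\<forall>x y. x \<in> S \<longrightarrow> y \<in> S \<longrightarrow> dist x y < d \<longrightarrow>
        (\<exists>C. connected C \<and> C \<subseteq> S \<and> x \<in> C \<and> y \<in> C \<and> C \<subseteq> ball x (e n))"
      using ulc_ex[OF S epos[of n]] by blast
    then show ?thesis using epos[of n] unfolding G_def
      by (intro exI[of _ "min d (e n)"]) auto
  qed
  then obtain d where "\<forall>n. G n (d n)" using choice by blast
  then have dpos: "\<And>n. d n > 0" and dle: "\<And>n. d n \<le> e n"
    and dC: "\<And>n x y. x \<in> S \<Longrightarrow> y \<in> S \<Longrightarrow> dist x y < d n \<Longrightarrow>
           (\<exists>C. connected C \<and> C \<subseteq> S \<and> x \<in> C \<and> y \<in> C \<and> C \<subseteq> ball x (e n))"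
    unfolding G_def by blast+
  define Q where "Q n x y c M \<longleftrightarrow> (\<forall>j\<ge>M. c j = y) \<and> (\<forall>j. c j \<in> S \<and> dist x (c j) < e n) \<and>
      (\<forall>j. dist (c j) (c (Suc j)) < d (Suc n))" for n x y and c :: "nat \<Rightarrow> 'v" and M
  have Qex: "\<exists>cM. fst cM 0 = x \<and> (x \<in> S \<and> y \<in> S \<and> dist x y < d n \<longrightarrow> Q n x y (fst cM) (snd cM))" for n x y
  proof (cases "x \<in> S \<and> y \<in> S \<and> dist x y < d n")
    case True
    then obtain C where C: "connected C" "C \<subseteq> S" "x \<in> C" "y \<in> C" "C \<subseteq> ball x (e n)"
      using dC by blast
    then obtain c M where c: "c 0 = x" "\<forall>j\<ge>M. c j = y" "\<forall>j. c j \<in> C" "\<forall>j. dist (c j) (c (Suc j)) < d (Suc n)"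
      using chain_exists[OF C(1,3,4) dpos[of "Suc n"]] by blast
    then show ?thesis using C unfolding Q_def
      by (intro exI[of _ "(c, M)"]) auto
  next
    case False
    then show ?thesis by (intro exI[of _ "(\<lambda>_. x, 0)"]) auto
  qed
  define CM where "CM n x y = (SOME cM. fst cM 0 = x \<and> (x \<in> S \<and> y \<in> S \<and> dist x y < d n \<longrightarrow> Q n x y (fst cM) (snd cM)))" for n x y
  define ch where "ch n x y = fst (CM n x y)" for n x y
  define mm where "mm n x y = snd (CM n x y)" for n x y
  have ch0: "ch n x y 0 = x" for n x y
    using someI_ex[OF Qex[of x y n]] by (simp add: ch_def CM_def)
  have chQ: "Q n x y (ch n x y) (mm n x y)" if "x \<in> S" "y \<in> S" "dist x y < d n" for n x y
    using someI_ex[OF Qex[of x y n]] that by (simp add: ch_def mm_def CM_def)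
  define step where "step n Lc = (let L = fst Lc; c = snd Lc;
       K = Max ((\<lambda>j. mm n (c j) (c (Suc j))) ` {..<(2::nat)^L}) in
       (L + K, \<lambda>j. ch n (c (j div 2^K)) (c (Suc (j div 2^K))) (j mod 2^K)))"
     for n and Lc :: "nat \<times> (nat \<Rightarrow> 'v)"
  show thesis
  proof (rule that[OF dpos[of 0]])
    fix a b assume ab: "a \<in> S" "b \<in> S" "dist a b < d 0"
    define lev where "lev = rec_nat (0, \<lambda>j. if j = 0 then a else b) step"
    define L where "L n = fst (lev n)" for n
    define c where "c n = snd (lev n)" for n
    define K where "K n = Max ((\<lambda>j. mm n (c n j) (c n (Suc j))) ` {..<(2::nat)^(L n)})" for n
    have L0: "L 0 = 0" and c0: "c 0 = (\<lambda>j. if j = 0 then a else b)"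
      by (simp_all add: L_def c_def lev_def)
    have LS: "L (Suc n) = L n + K n" for n
      by (simp add: L_def c_def lev_def K_def step_def Let_def)
    have cS: "c (Suc n) j = ch n (c n (j div 2^(K n))) (c n (Suc (j div 2^(K n)))) (j mod 2^(K n))" for n j
      by (simp add: L_def c_def lev_def K_def step_def Let_def)
    define I where "I n \<longleftrightarrow> c n 0 = a \<and> c n (2^(L n)) = b \<and> (\<forall>j\<le>2^(L n). c n j \<in> S) \<and>
       (\<forall>j<2^(L n). dist (c n j) (c n (Suc j)) < d n)" for n
    have stepI: "I (Suc n) \<and> (\<forall>j\<le>2^(L (Suc n)). dist (c n (j div 2^(K n))) (c (Suc n) j) < e n)"
      if In: "I n" for n
    proof -
      let ?K = "K n" and ?L = "L n"
      have mmK: "mm n (c n q) (c n (Suc q)) \<le> ?K" if "q < 2^?L" for q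
        unfolding K_def using that by (intro Max_ge) auto
      have Kpow: "?K < 2^?K" by simp
      have QQ: "Q n (c n q) (c n (Suc q)) (ch n (c n q) (c n (Suc q))) (mm n (c n q) (c n (Suc q)))"
        if "q < 2^?L" for q
        using that In unfolding I_def by (intro chQ) auto
      have divle: "(j::nat) div 2^?K \<le> 2^?L" if "j \<le> 2^(L (Suc n))" for j
      proof -
        have "j div 2^?K \<le> 2^(L (Suc n)) div 2^?K" by (rule div_le_mono[OF that])
        also have "\<dots> = 2^?L" unfolding LS power_add by simp
        finally show ?thesis .
      qed
      have top: "(j::nat) mod 2^?K = 0" if "j \<le> 2^(L (Suc n))" "j div 2^?K = 2^?L" for j
      proof -
        have "j = 2^?K * (j div 2^?K) + j mod 2^?K" by simp
        then have "j = 2^(L (Suc n)) + j mod 2^?K" using that(2) by (simp add: LS power_add mult.commute)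
        then show ?thesis using that(1) by linarith
      qed
      have anchor: "c (Suc n) j \<in> S \<and> dist (c n (j div 2^?K)) (c (Suc n) j) < e n" if "j \<le> 2^(L (Suc n))" for j
      proof (cases "j div 2^?K < 2^?L")
        case True
        then show ?thesis using QQ[OF True] unfolding cS Q_def by blast
      next
        case False
        then have "j div 2^?K = 2^?L" using divle[OF that] by linarith
        then have "c (Suc n) j = c n (2^?L)" using top[OF that] by (simp add: cS ch0)
        then show ?thesis using In epos[of n] \<open>j div 2^?K = 2^?L\<close> unfolding I_def by auto
      qed
      have "c (Suc n) 0 = a" using In by (simp add: cS ch0 I_def)
      moreover have "c (Suc n) (2^(L (Suc n))) = b"
        using In by (simp add: cS ch0 I_def LS power_add)
      moreover have "\<forall>j\<le>2^(L (Suc n)). c (Suc n) j \<in> S" using anchor by blast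
      moreover have "dist (c (Suc n) j) (c (Suc n) (Suc j)) < d (Suc n)" if "j < 2^(L (Suc n))" for j
      proof -
        define q where "q = j div 2^?K"
        define r where "r = j mod 2^?K"
        have qL: "q < 2^?L"
        proof -
          have "j div 2^?K < 2^(L (Suc n)) div 2^?K"
            using that by (simp add: LS power_add less_mult_imp_div_less)
          then show ?thesis by (simp add: q_def LS power_add)
        qed
        have r: "r < 2^?K" by (simp add: r_def)
        show ?thesis
        proof (cases "Suc r < 2^?K")
          case True
          have "Suc j div 2^?K = q" "Suc j mod 2^?K = Suc r"
            using True by (simp_all add: q_def r_def div_Suc mod_Suc)
          then show ?thesis using QQ[OF qL] unfolding cS Q_def by (simp add: q_def[symmetric] r_def[symmetric])
        next
          case False
          then have rr: "Suc r = 2^?K" using r by linarith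
          have "Suc j div 2^?K = Suc q" "Suc j mod 2^?K = 0"
            using rr by (simp_all add: q_def r_def div_Suc mod_Suc)
          moreover have "mm n (c n q) (c n (Suc q)) \<le> 2^?K"
            using mmK[OF qL] Kpow by linarith
          then have "ch n (c n q) (c n (Suc q)) (2^?K) = c n (Suc q)"
            using QQ[OF qL] unfolding Q_def by blast
          ultimately show ?thesis using QQ[OF qL] rr unfolding cS Q_def
            by (metis ch0 q_def r_def)
        qed
      qed
      ultimately show ?thesis using anchor unfolding I_def by blast
    qed
    have Iall: "I n" for n
    proof (induction n)
      case 0
      then show ?case using ab by (simp add: I_def L0 c0)
    next
      case (Suc n)
      then show ?case using stepI by blast
    qed
    have anch: "dist (c n (j div 2^(K n))) (c (Suc n) j) < e n" if "j \<le> 2^(L (Suc n))" for n j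
      using stepI[OF Iall[of n]] that by blast
    have Lmono: "L n \<le> L (n + i)" for n i
    proof (induction i)
      case (Suc i)
      then show ?case using LS[of "n+i"] by simp
    qed simp
    have casc: "\<forall>j \<le> 2^(L (n+i)). dist (c n (j div 2^(L (n+i) - L n))) (c (n+i) j) \<le> \<epsilon>/4 * (1/2^n - 1/2^(n+i))" for n i
    proof (induction i)
      case 0
      then show ?case by simp
    next
      case (Suc i)
      show ?case
      proof (intro allI impI)
        fix j :: nat assume j: "j \<le> 2^(L (n + Suc i))"
        define j' where "j' = j div 2^(K (n+i))"
        have j'le: "j' \<le> 2^(L (n+i))"
        proof -
          have "j' \<le> 2^(L (n + Suc i)) div 2^(K (n+i))" unfolding j'_def by (rule div_le_mono[OF j])
          also have "\<dots> = 2^(L (n+i))" using LS[of "n+i"] by (simp add: power_add)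
          finally show ?thesis .
        qed
        have "L (n + Suc i) - L n = K (n+i) + (L (n+i) - L n)"
          using LS[of "n+i"] Lmono[of n i] by simp
        then have jdiv: "j div 2^(L (n + Suc i) - L n) = j' div 2^(L (n+i) - L n)"
          by (simp add: j'_def power_add div_mult2_eq)
        have "dist (c n (j div 2^(L (n + Suc i) - L n))) (c (n + Suc i) j)
              \<le> dist (c n (j' div 2^(L (n+i) - L n))) (c (n+i) j') + dist (c (n+i) j') (c (n + Suc i) j)"
          unfolding jdiv by (rule dist_triangle)
        also have "\<dots> \<le> \<epsilon>/4 * (1/2^n - 1/2^(n+i)) + e (n+i)"
        proof -
          have h1: "dist (c n (j' div 2^(L (n+i) - L n))) (c (n+i) j') \<le> \<epsilon>/4 * (1/2^n - 1/2^(n+i))"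
            using Suc.IH j'le by blast
          have h2: "dist (c (n+i) j') (c (n + Suc i) j) < e (n+i)"
            using anch[of j "n+i"] j by (simp add: j'_def)
          show ?thesis using h1 h2 by linarith
        qed
        also have "\<dots> = \<epsilon>/4 * (1/2^n - 1/2^(n + Suc i))"
          by (simp add: e_def field_simps)
        finally show "dist (c n (j div 2^(L (n + Suc i) - L n))) (c (n + Suc i) j) \<le> \<epsilon>/4 * (1/2^n - 1/2^(n + Suc i))" .
      qed
    qed
    define idx where "idx n t = nat \<lfloor>t * 2^(L n)\<rfloor>" for n and t :: real
    have idxle: "idx n t \<le> 2^(L n)" if "t \<in> {0..1}" for n t
    proof -
      have "t * 2^(L n) \<le> 2^(L n)" using that by (simp add: mult_le_cancel_right1)
      then have "\<lfloor>t * 2^(L n)\<rfloor> \<le> 2^(L n)" by (metis floor_mono floor_numeral_power)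
      then show ?thesis unfolding idx_def by (metis nat_le_iff of_nat_numeral of_nat_power)
    qed
    define sq where "sq n t = c n (idx n t)" for n t
    have sqS: "sq n t \<in> S" if "t \<in> {0..1}" for n t
      using Iall[of n] idxle[OF that, of n] by (simp add: I_def sq_def)
    have sqc: "dist (sq n t) (sq m t) \<le> \<epsilon>/4/2^n" if tt: "t \<in> {0..1}" and nm: "n \<le> m" for n m t
    proof -
      obtain i where m: "m = n + i" using nm le_Suc_ex by blast
      have "idx m t div 2^(L m - L n) = idx n t"
        unfolding idx_def using tt nm Lmono[of n i] m by (intro floor_div_pow) auto
      then have "dist (sq n t) (sq m t) \<le> \<epsilon>/4 * (1/2^n - 1/2^(n+i))"
        using casc[of n i] idxle[OF tt, of m] m by (auto simp: sq_def)
      also have "\<dots> \<le> \<epsilon>/4/2^n" using assms(3) by (simp add: field_simps)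
      finally show ?thesis .
    qed
    have cauchy: "Cauchy (\<lambda>n. sq n t)" if "t \<in> {0..1}" for t
    proof (rule metric_CauchyI)
      fix \<eta> :: real assume "\<eta> > 0"
      then obtain N where N: "\<epsilon> / 2^N < \<eta>" using small_pow2[OF assms(3)] by blast
      show "\<exists>M. \<forall>m\<ge>M. \<forall>n\<ge>M. dist (sq m t) (sq n t) < \<eta>"
      proof (intro exI allI impI)
        fix m n assume "N \<le> m" "N \<le> n"
        have "dist (sq m t) (sq n t) \<le> dist (sq N t) (sq m t) + dist (sq N t) (sq n t)"
          by (rule dist_triangle3)
        also have "\<dots> \<le> \<epsilon>/4/2^N + \<epsilon>/4/2^N" using sqc that \<open>N \<le> m\<close> \<open>N \<le> n\<close> by (meson add_mono)
        also have "\<dots> < \<eta>" using N assms(3) by (simp add: field_simps)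
        finally show "dist (sq m t) (sq n t) < \<eta>" .
      qed
    qed
    define P where "P t = lim (\<lambda>n. sq n t)" for t
    have conv: "(\<lambda>n. sq n t) \<longlonglongrightarrow> P t" if "t \<in> {0..1}" for t
      using cauchy[OF that] unfolding P_def by (simp add: Cauchy_convergent_iff convergent_LIMSEQ_iff)
    have PS: "P t \<in> S" if "t \<in> {0..1}" for t
      by (rule closed_sequentially[OF compact_imp_closed[OF S(1)] _ conv[OF that]]) (use sqS that in blast)
    have Pd: "dist (sq n t) (P t) \<le> \<epsilon>/4/2^n" if "t \<in> {0..1}" for n t
    proof (rule Lim_dist_ubound[OF trivial_limit_sequentially conv[OF that]])
      show "\<forall>\<^sub>F m in sequentially. dist (sq n t) (sq m t) \<le> \<epsilon> / 4 / 2 ^ n"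
        using sqc[OF that] by (auto intro: eventually_sequentiallyI[of n])
    qed
    have P0: "P 0 = a"
    proof -
      have "sq n 0 = a" for n using Iall[of n] by (simp add: sq_def idx_def I_def)
      then show ?thesis unfolding P_def by simp
    qed
    have P1: "P 1 = b"
    proof -
      have "sq n 1 = b" for n using Iall[of n] by (simp add: sq_def idx_def I_def nat_power_eq)
      then show ?thesis unfolding P_def by simp
    qed
    have cont: "continuous_on {0..1} P"
      unfolding continuous_on_iff
    proof (intro ballI allI impI)
      fix t :: real and \<eta> :: real assume t: "t \<in> {0..1}" and "\<eta> > 0"
      then obtain n where n: "\<epsilon> / 2^n < \<eta>" using small_pow2[OF assms(3)] by blast
      show "\<exists>\<rho>>0. \<forall>s\<in>{0..1}. dist s t < \<rho> \<longrightarrow> dist (P s) (P t) < \<eta>"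
      proof (intro exI conjI ballI impI)
        show "(0::real) < 1 / 2^(L n)" by simp
        fix s assume s: "s \<in> {0..1}" and st: "dist s t < 1 / 2^(L n)"
        have "\<bar>s - t\<bar> * 2^(L n) < 1" using st by (simp add: dist_real_def field_simps)
        then have cases: "idx n s = idx n t \<or> idx n s = Suc (idx n t) \<or> idx n t = Suc (idx n s)"
          unfolding idx_def using s t by (intro floor_close) auto
        have mid: "dist (sq n s) (sq n t) \<le> e n"
        proof -
          have "dist (c n i) (c n (Suc i)) \<le> e n" if "Suc i \<le> 2^(L n)" for i
            using Iall[of n] that dle[of n] unfolding I_def by (meson Suc_le_lessD less_imp_le order_trans)
          then show ?thesis using cases idxle[OF s, of n] idxle[OF t, of n] epos[of n]
            by (auto simp: sq_def dist_commute)
        qed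
        have "dist (P s) (P t) \<le> dist (sq n s) (P s) + dist (sq n s) (sq n t) + dist (sq n t) (P t)"
          using dist_triangle[of "P s" "P t" "sq n s"] dist_triangle[of "sq n s" "P t" "sq n t"]
          by (simp add: dist_commute)
        also have "\<dots> \<le> \<epsilon>/4/2^n + e n + \<epsilon>/4/2^n"
          using Pd[OF s, of n] Pd[OF t, of n] mid by linarith
        also have "\<dots> < \<eta>" using n assms(3) by (simp add: e_def field_simps)
        finally show "dist (P s) (P t) < \<eta>" .
      qed
    qed
    have img: "P t \<in> S \<inter> ball a \<epsilon>" if t: "t \<in> {0..1}" for t
    proof -
      have "sq 0 t = a \<or> sq 0 t = b"
        by (simp add: sq_def c0)
      then have "dist a (sq 0 t) \<le> \<epsilon>/8" using ab dle[of 0] assms(3) by (auto simp: e_def)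
      moreover have "dist (sq 0 t) (P t) \<le> \<epsilon>/4" using Pd[OF t, of 0] by simp
      ultimately have "dist a (P t) < \<epsilon>" using assms(3) dist_triangle[of a "P t" "sq 0 t"] by linarith
      then show ?thesis using PS[OF t] by simp
    qed
    show "\<exists>p. path p \<and> pathstart p = a \<and> pathfinish p = b \<and> path_image p \<subseteq> S \<inter> ball a \<epsilon>"
      using cont P0 P1 img by (intro exI[of _ P]) (auto simp: path_def pathstart_def pathfinish_def path_image_def)
  qed
qed

locale dend =
  fixes S :: "'v::{real_normed_vector,complete_space} set"
  assumes cpt: "compact S" and lc: "locally connected S"
    and noscc: "\<And>T. T \<subseteq> S \<Longrightarrow> \<not> (T homeomorphic (sphere (0::complex) 1))"
begin

lemma arc_sub:
  assumes "arc g1" "arc g2" "path_image g1 \<subseteq> S" "path_image g2 \<subseteq> S"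
    "pathstart g1 = pathstart g2" "pathfinish g1 = pathfinish g2"
  shows "path_image g1 \<subseteq> path_image g2"
proof (rule ccontr)
  assume "\<not> path_image g1 \<subseteq> path_image g2"
  then obtain t0 where t0: "t0 \<in> {0..1}" "g1 t0 \<notin> path_image g2"
    unfolding path_image_def by (meson image_subset_iff)
  define P where "P = path_image g2"
  have "compact P" unfolding P_def using assms(2) by (simp add: arc_imp_path compact_path_image)
  then have "closed P" by (rule compact_imp_closed)
  have cg1: "continuous_on {0..1} g1" using assms(1) arc_imp_path path_def by blast
  define T where "T = {0..1} \<inter> g1 -` P"
  have "closed T" unfolding T_def by (rule continuous_closed_preimage[OF cg1 closed_atLeastAtMost \<open>closed P\<close>])
  have inj1: "inj_on g1 {0..1}" using assms(1) arc_imp_inj_on by blast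
  have g10: "g1 0 \<in> P" using assms(5) by (simp add: P_def pathstart_def path_image_def)
  have g11: "g1 1 \<in> P" using assms(6) by (simp add: P_def pathfinish_def path_image_def)
  define s where "s = Sup (T \<inter> {0..t0})"
  define u where "u = Inf (T \<inter> {t0..1})"
  have zT: "0 \<in> T \<inter> {0..t0}" using g10 t0 by (auto simp: T_def)
  have oT: "1 \<in> T \<inter> {t0..1}" using g11 t0 by (auto simp: T_def)
  have sT: "s \<in> T \<inter> {0..t0}" unfolding s_def
    by (rule closed_contains_Sup) (use zT \<open>closed T\<close> in \<open>auto simp: bdd_above_def\<close>)
  have uT: "u \<in> T \<inter> {t0..1}" unfolding u_def
    by (rule closed_contains_Inf) (use oT \<open>closed T\<close> in \<open>auto simp: bdd_below_def\<close>)
  have sge: "t \<le> s" if "t \<in> T" "t \<le> t0" for t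
    unfolding s_def by (rule cSup_upper) (use that in \<open>auto simp: T_def bdd_above_def\<close>)
  have ule: "u \<le> t" if "t \<in> T" "t \<ge> t0" for t
    unfolding u_def by (rule cInf_lower) (use that in \<open>auto simp: T_def bdd_below_def\<close>)
  have "t0 \<notin> T" using t0 by (simp add: T_def P_def)
  then have su: "s < t0" "t0 < u" using sT uT by (auto simp: le_less)
  have s01: "s \<in> {0..1}" and u01: "u \<in> {0..1}" using sT uT by (auto simp: T_def)
  have gap: "g1 t \<notin> P" if "s < t" "t < u" for t
  proof
    assume "g1 t \<in> P"
    then have "t \<in> T" using that s01 u01 by (auto simp: T_def)
    then show False using sge[of t] ule[of t] that by linarith
  qed
  have gsP: "g1 s \<in> P" and guP: "g1 u \<in> P" using sT uT by (auto simp: T_def)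
  then obtain \<sigma> \<tau> where st: "\<sigma> \<in> {0..1}" "\<tau> \<in> {0..1}" "g2 \<sigma> = g1 s" "g2 \<tau> = g1 u"
    unfolding P_def path_image_def by (metis imageE)
  have "g1 s \<noteq> g1 u" using inj1 s01 u01 su by (metis inj_onD order.strict_trans less_irrefl)
  then have "\<sigma> \<noteq> \<tau>" using st by auto
  define A where "A = subpath s u g1"
  define B where "B = subpath \<tau> \<sigma> g2"
  have arcA: "arc A" unfolding A_def using assms(1) s01 u01 su by (intro arc_subpath_arc) auto
  have arcB: "arc B" unfolding B_def using assms(2) st \<open>\<sigma> \<noteq> \<tau>\<close> by (intro arc_subpath_arc) auto
  have imA: "path_image A = g1 ` {s..u}" using su by (simp add: A_def path_image_subpath)
  have imB: "path_image B \<subseteq> P"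
    unfolding B_def P_def using st by (intro path_image_subpath_subset) (auto simp: arc_imp_path assms)
  have int: "path_image A \<inter> path_image B \<subseteq> {pathstart A, pathstart B}"
  proof
    fix x assume "x \<in> path_image A \<inter> path_image B"
    then obtain t where t: "t \<in> {s..u}" "x = g1 t" "x \<in> P" using imA imB by auto
    then have "t = s \<or> t = u" using gap[of t] by force
    then show "x \<in> {pathstart A, pathstart B}" using t st by (auto simp: A_def B_def)
  qed
  have sp: "simple_path (A +++ B)"
    by (rule simple_path_join_loop[OF arcA arcB]) (use st int in \<open>auto simp: A_def B_def\<close>)
  have loop: "pathfinish (A +++ B) = pathstart (A +++ B)" using st by (simp add: A_def B_def)
  have "path_image (A +++ B) homeomorphic sphere (0::complex) 1"
    by (rule homeomorphic_simple_path_image_circle[OF sp loop]) simp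
  moreover have "path_image (A +++ B) \<subseteq> S"
  proof -
    have "path_image A \<subseteq> S" using imA assms(3) s01 u01 by (auto simp: path_image_def)
    moreover have "path_image B \<subseteq> S" using imB assms(4) P_def by auto
    ultimately show ?thesis using path_image_join_subset by blast
  qed
  ultimately show False using noscc by blast
qed

lemma arc_unique:
  assumes "arc g1" "arc g2" "path_image g1 \<subseteq> S" "path_image g2 \<subseteq> S"
    "pathstart g1 = pathstart g2" "pathfinish g1 = pathfinish g2"
  shows "path_image g1 = path_image g2"
  using arc_sub[OF assms] arc_sub[OF assms(2,1,4,3) assms(5,6)[symmetric]] by blast


lemma local_arc:
  assumes "r > 0"
  shows "\<exists>\<delta>>0. \<forall>u v. u \<in> S \<longrightarrow> v \<in> S \<longrightarrow> dist u v < \<delta> \<longrightarrow> u \<noteq> v \<longrightarrow>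
     (\<exists>\<gamma>. arc \<gamma> \<and> pathstart \<gamma> = u \<and> pathfinish \<gamma> = v \<and> path_image \<gamma> \<subseteq> S \<inter> ball u r)"
proof (rule local_path[OF cpt lc assms])
  fix \<delta> :: real assume d: "\<delta> > 0" and H: "\<And>a b. a \<in> S \<Longrightarrow> b \<in> S \<Longrightarrow> dist a b < \<delta> \<Longrightarrow>
      \<exists>p. path p \<and> pathstart p = a \<and> pathfinish p = b \<and> path_image p \<subseteq> S \<inter> ball a r"
  have "\<exists>\<gamma>. arc \<gamma> \<and> pathstart \<gamma> = u \<and> pathfinish \<gamma> = v \<and> path_image \<gamma> \<subseteq> S \<inter> ball u r"
    if uv: "u \<in> S" "v \<in> S" "dist u v < \<delta>" "u \<noteq> v" for u v
  proof -
    obtain p where p: "path p" "pathstart p = u" "pathfinish p = v" "path_image p \<subseteq> S \<inter> ball u r"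
      using H[OF uv(1-3)] by blast
    obtain q where "arc q" "path_image q \<subseteq> path_image p" "pathstart q = u" "pathfinish q = v"
      using path_contains_arc[OF p(1-3) uv(4)] by blast
    then show ?thesis using p(4) by blast
  qed
  then show ?thesis using d by blast
qed

lemma lpc: "locally path_connected S"
  unfolding locally_path_connected_im_kleinen
proof (intro allI impI)
  fix V x assume Vx: "openin (top_of_set S) V \<and> x \<in> V"
  then obtain r where r: "r > 0" "ball x r \<inter> S \<subseteq> V"
    by (meson openin_contains_ball)
  have "\<exists>\<delta>>0. \<forall>a b. a \<in> S \<longrightarrow> b \<in> S \<longrightarrow> dist a b < \<delta> \<longrightarrow>
      (\<exists>p. path p \<and> pathstart p = a \<and> pathfinish p = b \<and> path_image p \<subseteq> S \<inter> ball a r)"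
  proof (rule local_path[OF cpt lc r(1)])
    fix \<delta> :: real assume "\<delta> > 0" "\<And>a b. a \<in> S \<Longrightarrow> b \<in> S \<Longrightarrow> dist a b < \<delta> \<Longrightarrow>
      \<exists>p. path p \<and> pathstart p = a \<and> pathfinish p = b \<and> path_image p \<subseteq> S \<inter> ball a r"
    then show ?thesis by (intro exI[of _ \<delta>]) auto
  qed
  then obtain \<delta> where d: "\<delta> > 0" "\<And>a b. a \<in> S \<Longrightarrow> b \<in> S \<Longrightarrow> dist a b < \<delta> \<Longrightarrow>
      \<exists>p. path p \<and> pathstart p = a \<and> pathfinish p = b \<and> path_image p \<subseteq> S \<inter> ball a r"
    by blast
  have xS: "x \<in> S" using Vx openin_imp_subset by blast
  show "\<exists>U. openin (top_of_set S) U \<and> x \<in> U \<and> U \<subseteq> V \<and>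
          (\<forall>y. y \<in> U \<longrightarrow> (\<exists>p. path p \<and> path_image p \<subseteq> V \<and> pathstart p = x \<and> pathfinish p = y))"
  proof (rule exI[of _ "S \<inter> ball x (min \<delta> r)"], intro conjI allI impI)
    show "openin (top_of_set S) (S \<inter> ball x (min \<delta> r))" by (simp add: openin_open_Int)
    show "x \<in> S \<inter> ball x (min \<delta> r)" using xS d r by simp
    show "S \<inter> ball x (min \<delta> r) \<subseteq> V" using r by auto
    fix y assume y: "y \<in> S \<inter> ball x (min \<delta> r)"
    obtain p where "path p" "pathstart p = x" "pathfinish p = y" "path_image p \<subseteq> S \<inter> ball x r"
    proof -
      have "y \<in> S" "dist x y < \<delta>" using y by auto
      then show ?thesis using d(2)[OF xS] that by blast
    qed
    then show "\<exists>p. path p \<and> path_image p \<subseteq> V \<and> pathstart p = x \<and> pathfinish p = y"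
      using r by (intro exI[of _ p]) auto
  qed
qed

lemma arc_in_open:
  assumes "openin (top_of_set S) T" "connected T" "u \<in> T" "v \<in> T" "u \<noteq> v"
  shows "\<exists>\<gamma>. arc \<gamma> \<and> pathstart \<gamma> = u \<and> pathfinish \<gamma> = v \<and> path_image \<gamma> \<subseteq> T"
proof -
  have "locally path_connected T" by (rule locally_open_subset[OF lpc assms(1)])
  then have "path_component_set T u = T"
    using path_component_eq_connected_component_set connected_component_eq_self assms by metis
  then have "path_component T u v" using assms(4) by (metis mem_Collect_eq)
  then obtain g where g: "path g" "path_image g \<subseteq> T" "pathstart g = u" "pathfinish g = v"
    unfolding path_component_def by blast
  obtain q where "arc q" "path_image q \<subseteq> path_image g" "pathstart q = u" "pathfinish q = v"
    using path_contains_arc[OF g(1,3,4) assms(5)] by blast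
  then show ?thesis using g(2) by blast
qed

end

locale dend2 = dend +
  assumes conn: "connected S"
begin

definition seg where
  "seg x y = (if x = y then {x} else path_image (SOME \<gamma>. arc \<gamma> \<and> pathstart \<gamma> = x \<and> pathfinish \<gamma> = y \<and> path_image \<gamma> \<subseteq> S))"

lemma seg_eq:
  assumes "arc \<gamma>" "path_image \<gamma> \<subseteq> S" "pathstart \<gamma> = x" "pathfinish \<gamma> = y"
  shows "seg x y = path_image \<gamma>"
proof -
  have "x \<noteq> y" using arc_distinct_ends assms by metis
  define \<beta> where "\<beta> = (SOME \<gamma>. arc \<gamma> \<and> pathstart \<gamma> = x \<and> pathfinish \<gamma> = y \<and> path_image \<gamma> \<subseteq> S)"
  have "arc \<beta> \<and> pathstart \<beta> = x \<and> pathfinish \<beta> = y \<and> path_image \<beta> \<subseteq> S"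
    unfolding \<beta>_def by (rule someI[of _ \<gamma>]) (use assms in auto)
  then have "path_image \<beta> = path_image \<gamma>"
    using arc_unique assms by metis
  then show ?thesis using \<open>x \<noteq> y\<close> by (simp add: seg_def \<beta>_def)
qed

lemma seg_ex:
  assumes "x \<in> S" "y \<in> S" "x \<noteq> y"
  obtains \<gamma> where "arc \<gamma>" "path_image \<gamma> \<subseteq> S" "pathstart \<gamma> = x" "pathfinish \<gamma> = y" "seg x y = path_image \<gamma>"
proof -
  obtain \<gamma> where "arc \<gamma>" "pathstart \<gamma> = x" "pathfinish \<gamma> = y" "path_image \<gamma> \<subseteq> S"
    using arc_in_open[of S x y] assms conn by auto
  then show thesis using that seg_eq by blast
qed

lemma seg_refl [simp]: "seg x x = {x}" by (simp add: seg_def)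

lemma seg_subset: "x \<in> S \<Longrightarrow> y \<in> S \<Longrightarrow> seg x y \<subseteq> S"
  by (metis seg_ex seg_refl empty_subsetI insert_subset)

lemma seg_ends: "x \<in> S \<Longrightarrow> y \<in> S \<Longrightarrow> x \<in> seg x y \<and> y \<in> seg x y"
  by (metis seg_ex seg_refl singletonI pathstart_in_path_image pathfinish_in_path_image)

lemma seg_param:
  assumes "arc \<gamma>" "path_image \<gamma> \<subseteq> S" "t \<in> {0..1}"
  shows "seg (pathstart \<gamma>) (\<gamma> t) = \<gamma> ` {0..t}" "seg (\<gamma> t) (pathfinish \<gamma>) = \<gamma> ` {t..1}"
proof -
  show "seg (pathstart \<gamma>) (\<gamma> t) = \<gamma> ` {0..t}"
  proof (cases "t = 0")
    case True then show ?thesis by (simp add: pathstart_def)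
  next
    case False
    then have "arc (subpath 0 t \<gamma>)" using assms by (intro arc_subpath_arc) auto
    moreover have "path_image (subpath 0 t \<gamma>) = \<gamma> ` {0..t}" using assms by (simp add: path_image_subpath)
    moreover have "\<gamma> ` {0..t} \<subseteq> S" using assms by (auto simp: path_image_def)
    ultimately show ?thesis by (metis seg_eq pathstart_subpath pathfinish_subpath pathstart_def)
  qed
  show "seg (\<gamma> t) (pathfinish \<gamma>) = \<gamma> ` {t..1}"
  proof (cases "t = 1")
    case True then show ?thesis by (simp add: pathfinish_def)
  next
    case False
    then have "arc (subpath t 1 \<gamma>)" using assms by (intro arc_subpath_arc) auto
    moreover have "path_image (subpath t 1 \<gamma>) = \<gamma> ` {t..1}" using assms by (simp add: path_image_subpath)
    moreover have "\<gamma> ` {t..1} \<subseteq> S" using assms by (auto simp: path_image_def)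
    ultimately show ?thesis by (metis seg_eq pathstart_subpath pathfinish_subpath pathfinish_def)
  qed
qed


lemma seg_mono:
  assumes "e \<in> S" "c \<in> S" "b \<in> seg e c"
  shows "seg e b \<subseteq> seg e c"
proof (cases "e = c")
  case True then show ?thesis using assms by simp
next
  case False
  then obtain \<gamma> where g: "arc \<gamma>" "path_image \<gamma> \<subseteq> S" "pathstart \<gamma> = e" "pathfinish \<gamma> = c" "seg e c = path_image \<gamma>"
    using seg_ex assms by metis
  then obtain t where t: "t \<in> {0..1}" "b = \<gamma> t" using assms(3) by (auto simp: path_image_def)
  have "seg e b = \<gamma> ` {0..t}" using seg_param(1)[OF g(1,2) t(1)] g(3) t(2) by simp
  also have "\<dots> \<subseteq> seg e c" using g(5) t(1) by (auto simp: path_image_def)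
  finally show ?thesis .
qed

lemma seg_trans: "e \<in> S \<Longrightarrow> c \<in> S \<Longrightarrow> a \<in> seg e b \<Longrightarrow> b \<in> seg e c \<Longrightarrow> a \<in> seg e c"
  using seg_mono by blast

lemma seg_comparable:
  assumes "e \<in> S" "w \<in> S" "z1 \<in> seg e w" "z2 \<in> seg e w"
  shows "z1 \<in> seg e z2 \<or> z2 \<in> seg e z1"
proof (cases "e = w")
  case True then show ?thesis using assms by simp
next
  case False
  then obtain \<gamma> where g: "arc \<gamma>" "path_image \<gamma> \<subseteq> S" "pathstart \<gamma> = e" "pathfinish \<gamma> = w" "seg e w = path_image \<gamma>"
    using seg_ex assms by metis
  obtain s where s: "s \<in> {0..1}" "z1 = \<gamma> s" using assms(3) g(5) by (auto simp: path_image_def)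
  obtain t where t: "t \<in> {0..1}" "z2 = \<gamma> t" using assms(4) g(5) by (auto simp: path_image_def)
  have "seg e z1 = \<gamma> ` {0..s}" using seg_param(1)[OF g(1,2) s(1)] g(3) s(2) by simp
  moreover have "seg e z2 = \<gamma> ` {0..t}" using seg_param(1)[OF g(1,2) t(1)] g(3) t(2) by simp
  ultimately show ?thesis using s t by (cases "s \<le> t") auto
qed

lemma seg_betw:
  assumes "e \<in> S" "b \<in> S" "a \<in> seg e c" "c \<in> seg e b"
  shows "c \<in> seg a b"
proof (cases "e = b")
  case True then show ?thesis using assms by simp
next
  case False
  then obtain \<gamma> where g: "arc \<gamma>" "path_image \<gamma> \<subseteq> S" "pathstart \<gamma> = e" "pathfinish \<gamma> = b" "seg e b = path_image \<gamma>"
    using seg_ex assms by metis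
  obtain u where u: "u \<in> {0..1}" "c = \<gamma> u" using assms(4) g(5) by (auto simp: path_image_def)
  have "seg e c = \<gamma> ` {0..u}" using seg_param(1)[OF g(1,2) u(1)] g(3) u(2) by simp
  then obtain s where s: "s \<in> {0..u}" "a = \<gamma> s" using assms(3) by auto
  have s1: "s \<in> {0..1}" using s u by auto
  have "seg a b = \<gamma> ` {s..1}" using seg_param(2)[OF g(1,2) s1] g(4) s(2) by simp
  then show ?thesis using s u by auto
qed

lemma homeo_arc:
  assumes f: "homeomorphism S S f f'" and "arc \<gamma>" "path_image \<gamma> \<subseteq> S"
  shows "arc (f \<circ> \<gamma>)" "path_image (f \<circ> \<gamma>) \<subseteq> S"
proof -
  have cf: "continuous_on S f" and fS: "f ` S = S" and inv: "\<And>x. x \<in> S \<Longrightarrow> f' (f x) = x"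
    using f by (auto simp: homeomorphism_def)
  have injf: "inj_on f S" using inv by (metis inj_on_inverseI)
  have cg: "continuous_on {0..1} \<gamma>" using assms(2) by (simp add: arc_imp_path path_def[symmetric])
  have gS: "\<gamma> ` {0..1} \<subseteq> S" using assms(3) by (simp add: path_image_def)
  have "path (f \<circ> \<gamma>)" unfolding path_def
    by (rule continuous_on_compose[OF cg continuous_on_subset[OF cf gS]])
  moreover have "inj_on (f \<circ> \<gamma>) {0..1}"
    using arc_imp_inj_on[OF assms(2)] injf gS by (metis comp_inj_on inj_on_subset)
  ultimately show "arc (f \<circ> \<gamma>)" by (simp add: arc_def)
  show "path_image (f \<circ> \<gamma>) \<subseteq> S" using gS fS by (auto simp: path_image_def)
qed

lemma homeo_seg:
  assumes f: "homeomorphism S S f f'" and "x \<in> S" "y \<in> S"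
  shows "f ` seg x y = seg (f x) (f y)"
proof (cases "x = y")
  case True then show ?thesis by simp
next
  case False
  then obtain \<gamma> where g: "arc \<gamma>" "path_image \<gamma> \<subseteq> S" "pathstart \<gamma> = x" "pathfinish \<gamma> = y" "seg x y = path_image \<gamma>"
    using seg_ex assms by metis
  have "seg (f x) (f y) = path_image (f \<circ> \<gamma>)"
    by (rule seg_eq[OF homeo_arc[OF f g(1,2)]]) (use g in \<open>auto simp: pathstart_def pathfinish_def\<close>)
  then show ?thesis using g(5) by (simp add: path_image_compose)
qed

lemma localseg:
  assumes "r > 0"
  shows "\<exists>\<delta>>0. \<forall>u v. u \<in> S \<longrightarrow> v \<in> S \<longrightarrow> dist u v < \<delta> \<longrightarrow> seg u v \<subseteq> ball u r"
proof -
  obtain \<delta> where d: "\<delta> > 0" and H: "\<forall>u v. u \<in> S \<longrightarrow> v \<in> S \<longrightarrow> dist u v < \<delta> \<longrightarrow> u \<noteq> v \<longrightarrow>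
     (\<exists>\<gamma>. arc \<gamma> \<and> pathstart \<gamma> = u \<and> pathfinish \<gamma> = v \<and> path_image \<gamma> \<subseteq> S \<inter> ball u r)"
    using local_arc[OF assms] by blast
  have "seg u v \<subseteq> ball u r" if uv: "u \<in> S" "v \<in> S" "dist u v < \<delta>" for u v
  proof (cases "u = v")
    case True then show ?thesis using assms by simp
  next
    case False
    then obtain \<gamma> where "arc \<gamma>" "pathstart \<gamma> = u" "pathfinish \<gamma> = v" "path_image \<gamma> \<subseteq> S \<inter> ball u r"
      using H uv by blast
    then show ?thesis using seg_eq by (metis le_inf_iff)
  qed
  then show ?thesis using d by blast
qed

end

context dend2
begin

lemma iter_contra:
  assumes f: "homeomorphism S S f f'" and eS: "e \<in> S" and fe: "f e = e"
    and nofix: "\<And>p. p \<in> S \<Longrightarrow> p \<noteq> e \<Longrightarrow> f p \<noteq> p"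
    and y: "y \<in> S" "y \<noteq> e" "y \<in> seg e (f y)"
  shows False
proof -
  have fS: "\<And>x. x \<in> S \<Longrightarrow> f x \<in> S" using f by (auto simp: homeomorphism_def)
  define z where "z n = (f ^^ n) y" for n
  have zS: "z n \<in> S" for n by (induction n) (auto simp: z_def fS y)
  have zSuc: "z (Suc n) = f (z n)" for n by (simp add: z_def)
  have step: "z n \<in> seg e (z (Suc n))" for n
  proof (induction n)
    case 0 then show ?case using y by (simp add: z_def)
  next
    case (Suc n)
    then have "f (z n) \<in> f ` seg e (z (Suc n))" by blast
    also have "\<dots> = seg e (z (Suc (Suc n)))" using homeo_seg[OF f eS zS[of "Suc n"]] fe zSuc[of "Suc n"] by simp
    finally show ?case by (simp add: zSuc)
  qed
  have mono: "z m \<in> seg e (z n)" if "m \<le> n" for m n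
    using that
  proof (induction n)
    case 0 then show ?case using seg_ends eS zS by simp
  next
    case (Suc n)
    show ?case
    proof (cases "m = Suc n")
      case True then show ?thesis using seg_ends eS zS by blast
    next
      case False then have "m \<le> n" using Suc by simp
      then show ?thesis using Suc.IH step seg_trans eS zS by blast
    qed
  qed
  have yz: "y \<in> seg e (z n)" for n using mono[of 0 n] by (simp add: z_def)
  have betw: "z c \<in> seg (z a) (z b)" if "a \<le> c" "c \<le> b" for a b c
    using seg_betw[OF eS zS mono[OF that(1)] mono[OF that(2)]] .
  have uniq: "p = q" if p: "\<forall>\<delta>>0. \<forall>N. \<exists>n\<ge>N. dist (z n) p < \<delta>" and q: "\<forall>\<delta>>0. \<forall>N. \<exists>n\<ge>N. dist (z n) q < \<delta>" for p q
  proof (rule ccontr)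
    assume "p \<noteq> q"
    define r where "r = dist p q / 3"
    have r: "r > 0" using \<open>p \<noteq> q\<close> by (simp add: r_def)
    obtain \<delta> where d: "\<delta> > 0" "\<forall>u v. u \<in> S \<longrightarrow> v \<in> S \<longrightarrow> dist u v < \<delta> \<longrightarrow> seg u v \<subseteq> ball u r"
      using localseg[OF r] by blast
    define \<delta>' where "\<delta>' = min \<delta> r / 2"
    have "\<delta>' > 0" using d r by (simp add: \<delta>'_def)
    obtain a where a: "dist (z a) p < \<delta>'" using p \<open>\<delta>' > 0\<close> by blast
    obtain c where c: "c \<ge> a" "dist (z c) q < r" using q r by blast
    obtain b where b: "b \<ge> c" "dist (z b) p < \<delta>'" using p \<open>\<delta>' > 0\<close> by blast
    have "dist (z a) (z b) \<le> dist (z a) p + dist (z b) p" using dist_triangle[of "z a" "z b" p] by (simp add: dist_commute)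
    also have "\<dots> < \<delta>" using a b(2) by (simp add: \<delta>'_def)
    finally have "seg (z a) (z b) \<subseteq> ball (z a) r" using d zS by blast
    moreover have "z c \<in> seg (z a) (z b)" using betw c b by simp
    ultimately have ac: "dist (z a) (z c) < r" by auto
    have "dist p q \<le> dist p (z a) + dist (z a) (z c) + dist (z c) q"
      using dist_triangle[of p q "z a"] dist_triangle[of "z a" q "z c"] by linarith
    moreover have "dist p (z a) < r / 2" using a by (simp add: \<delta>'_def dist_commute)
    ultimately show False using ac c(2) r zero_le_dist[of p q] by (simp add: r_def dist_commute)
  qed
  obtain p \<phi> where p: "p \<in> S" "strict_mono \<phi>" "(z \<circ> \<phi>) \<longlonglongrightarrow> p"
    using seq_compactE[OF compact_imp_seq_compact[OF cpt]] zS by metis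
  have pfreq: "\<forall>\<delta>>0. \<forall>N. \<exists>n\<ge>N. dist (z n) p < \<delta>"
  proof (intro allI impI)
    fix \<delta> :: real and N assume "\<delta> > 0"
    then obtain M where M: "\<forall>k\<ge>M. dist ((z \<circ> \<phi>) k) p < \<delta>" using p(3) lim_sequentially by blast
    then have "dist (z (\<phi> (max M N))) p < \<delta>" by simp
    moreover have "\<phi> (max M N) \<ge> N" using seq_suble[OF p(2)] by (meson max.cobounded2 order_trans)
    ultimately show "\<exists>n\<ge>N. dist (z n) p < \<delta>" by blast
  qed
  have lim: "z \<longlonglongrightarrow> p"
  proof (rule ccontr)
    assume "\<not> z \<longlonglongrightarrow> p"
    then obtain \<eta> where \<eta>: "\<eta> > 0" "\<forall>N. \<exists>n\<ge>N. dist (z n) p \<ge> \<eta>"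
      unfolding lim_sequentially by (meson not_le)
    define \<psi> where "\<psi> k = (SOME n. n \<ge> k \<and> dist (z n) p \<ge> \<eta>)" for k
    have \<psi>: "\<psi> k \<ge> k \<and> dist (z (\<psi> k)) p \<ge> \<eta>" for k
      unfolding \<psi>_def by (rule someI_ex) (use \<eta>(2) in blast)
    define K where "K = S - ball p \<eta>"
    have "compact K" using cpt by (simp add: K_def compact_diff)
    have "z (\<psi> k) \<in> K" for k using \<psi>[of k] zS[of "\<psi> k"] by (auto simp: K_def dist_commute)
    then obtain q \<rho> where q: "q \<in> K" "strict_mono \<rho>" "((\<lambda>k. z (\<psi> k)) \<circ> \<rho>) \<longlonglongrightarrow> q"
      using seq_compactE[OF compact_imp_seq_compact[OF \<open>compact K\<close>]] by metis
    have "\<forall>\<delta>>0. \<forall>N. \<exists>n\<ge>N. dist (z n) q < \<delta>"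
    proof (intro allI impI)
      fix \<delta> :: real and N assume "\<delta> > 0"
      then obtain M where "\<forall>k\<ge>M. dist (((\<lambda>k. z (\<psi> k)) \<circ> \<rho>) k) q < \<delta>" using q(3) lim_sequentially by blast
      then have "dist (z (\<psi> (\<rho> (max M N)))) q < \<delta>" by simp
      moreover have "\<psi> (\<rho> (max M N)) \<ge> N" using \<psi> seq_suble[OF q(2)] by (meson max.cobounded2 order_trans)
      ultimately show "\<exists>n\<ge>N. dist (z n) q < \<delta>" by blast
    qed
    then have "q = p" using uniq pfreq by blast
    then show False using q(1) \<eta>(1) by (simp add: K_def)
  qed
  have "(\<lambda>n. z (Suc n)) \<longlonglongrightarrow> p" using lim by (rule LIMSEQ_Suc)
  moreover have "(\<lambda>n. z (Suc n)) \<longlonglongrightarrow> f p"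
  proof -
    have cf: "continuous_on S f" using f by (simp add: homeomorphism_def)
    have "(\<lambda>n. f (z n)) \<longlonglongrightarrow> f p"
      by (rule continuous_on_tendsto_compose[OF cf lim p(1)]) (simp add: zS)
    then show ?thesis by (simp add: zSuc)
  qed
  ultimately have "f p = p" using LIMSEQ_unique by metis
  moreover have "p \<noteq> e"
  proof
    assume "p = e"
    define r where "r = dist e y / 2"
    have r: "r > 0" using y(2) by (simp add: r_def)
    obtain \<delta> where d: "\<delta> > 0" "\<forall>u v. u \<in> S \<longrightarrow> v \<in> S \<longrightarrow> dist u v < \<delta> \<longrightarrow> seg u v \<subseteq> ball u r"
      using localseg[OF r] by blast
    obtain n where "dist (z n) e < \<delta>" using lim \<open>p = e\<close> d(1) lim_sequentially by blast
    then have "seg e (z n) \<subseteq> ball e r" using d eS zS by (simp add: dist_commute)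
    then have "dist e y < r" using yz[of n] by auto
    then show False using r by (simp add: r_def)
  qed
  ultimately show False using nofix p(1) by blast
qed


lemma main_fix:
  assumes g: "homeomorphism S S g g'" and eS: "e \<in> S" and ge: "g e = e"
    and endp: "connected (S - {e})" and x: "x \<in> S" "x \<noteq> e"
  shows "\<exists>p\<in>S. p \<noteq> e \<and> g p = p"
proof (rule ccontr)
  assume "\<not> ?thesis"
  then have nofix: "\<And>p. p \<in> S \<Longrightarrow> p \<noteq> e \<Longrightarrow> g p \<noteq> p" by blast
  have gS: "\<And>u. u \<in> S \<Longrightarrow> g u \<in> S" and g'S: "\<And>u. u \<in> S \<Longrightarrow> g' u \<in> S"
    and gg': "\<And>u. u \<in> S \<Longrightarrow> g (g' u) = u" and g'g: "\<And>u. u \<in> S \<Longrightarrow> g' (g u) = u"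
    using g by (auto simp: homeomorphism_def)
  have g': "homeomorphism S S g' g" using g homeomorphism_sym by blast
  have g'e: "g' e = e" using g'g[OF eS] ge by simp
  have nofix': "\<And>p. p \<in> S \<Longrightarrow> p \<noteq> e \<Longrightarrow> g' p \<noteq> p"
    using nofix gg' g'S by metis
  define x' where "x' = g x"
  have x'S: "x' \<in> S" using gS x by (simp add: x'_def)
  have x'e: "x' \<noteq> e" using g'g x eS ge unfolding x'_def by metis
  have xx': "x \<noteq> x'" using nofix[OF x] unfolding x'_def by metis
  have "\<exists>y. y \<in> seg e x \<and> y \<in> seg e x' \<and> y \<noteq> e"
  proof (rule ccontr)
    assume "\<not> ?thesis"
    then have int: "seg e x \<inter> seg e x' \<subseteq> {e}" by blast
    obtain \<alpha> where \<alpha>: "arc \<alpha>" "path_image \<alpha> \<subseteq> S" "pathstart \<alpha> = e" "pathfinish \<alpha> = x" "seg e x = path_image \<alpha>"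
      using seg_ex[OF eS x(1)] x(2) by metis
    obtain \<beta> where \<beta>: "arc \<beta>" "path_image \<beta> \<subseteq> S" "pathstart \<beta> = e" "pathfinish \<beta> = x'" "seg e x' = path_image \<beta>"
      using seg_ex[OF eS x'S] x'e by metis
    have arcj: "arc (reversepath \<alpha> +++ \<beta>)"
      by (rule arc_join) (use \<alpha> \<beta> int in \<open>auto simp: arc_reversepath\<close>)
    have imj: "path_image (reversepath \<alpha> +++ \<beta>) = path_image \<alpha> \<union> path_image \<beta>"
      using \<alpha> \<beta> by (simp add: path_image_join)
    have "openin (top_of_set S) (S \<inter> (- {e}))" by (rule openin_open_Int) auto
    moreover have "S \<inter> (- {e}) = S - {e}" by blast
    ultimately have op: "openin (top_of_set S) (S - {e})" by simp
    obtain \<gamma> where \<gamma>: "arc \<gamma>" "pathstart \<gamma> = x" "pathfinish \<gamma> = x'" "path_image \<gamma> \<subseteq> S - {e}"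
      using arc_in_open[OF op endp] x x'S x'e xx' by blast
    have "path_image \<gamma> = path_image (reversepath \<alpha> +++ \<beta>)"
      by (rule arc_unique[OF \<gamma>(1) arcj]) (use \<gamma> \<alpha> \<beta> imj in auto)
    moreover have "e \<in> path_image \<beta>" using \<beta>(3) pathstart_in_path_image by metis
    ultimately show False using imj \<gamma>(4) by auto
  qed
  then obtain y where y: "y \<in> seg e x" "y \<in> seg e x'" "y \<noteq> e" by blast
  have yS: "y \<in> S" using y(1) seg_subset[OF eS x(1)] by blast
  have "g ` seg e x = seg e x'" using homeo_seg[OF g eS x(1)] ge by (simp add: x'_def)
  then have gy: "g y \<in> seg e x'" using y(1) by blast
  have "y \<in> seg e (g y) \<or> g y \<in> seg e y" by (rule seg_comparable[OF eS x'S y(2) gy])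
  then show False
  proof
    assume "y \<in> seg e (g y)"
    then show False using iter_contra[OF g eS ge nofix yS y(3)] by blast
  next
    assume "g y \<in> seg e y"
    then have "g' (g y) \<in> g' ` seg e y" by blast
    also have "g' ` seg e y = seg e (g' y)" using homeo_seg[OF g' eS yS] g'e by simp
    finally have "y \<in> seg e (g' y)" using g'g yS by simp
    then show False using iter_contra[OF g' eS g'e nofix' yS y(3)] by blast
  qed
qed

end

lemma hm_iff:
  "homeomorphic_maps (top_of_set A) (top_of_set B) f g \<longleftrightarrow> homeomorphism A B f g"
  unfolding homeomorphic_maps_def homeomorphism_def
  by (auto simp: continuous_map_subtopology_eu Pi_iff image_iff) (metis imageI)+

lemma hs_iff: "top_of_set A homeomorphic_space top_of_set B \<longleftrightarrow> A homeomorphic B"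
  by (simp add: homeomorphic_space_def homeomorphic_def hm_iff)

lemma lc_transfer:
  assumes "locally_connected_space (top_of_set S)"
  shows "locally connected S"
  using assms unfolding locally_connected locally_connected_space connectedin_subtopology connectedin_iff_connected
  by blast

lemma transfer_main:
  fixes \<phi> :: "'a \<Rightarrow> 'v::{real_normed_vector,complete_space}"
  assumes hm: "homeomorphic_maps X (top_of_set S) \<phi> \<psi>"
    and den: "dendrite X" and ep: "end_point X e" and hh: "homeomorphic_map X X h" and he: "h e = e"
    and x: "x \<in> topspace X" "x \<noteq> e"
  shows "\<exists>p\<in>topspace X. p \<noteq> e \<and> h p = p"
proof -
  have c\<phi>: "continuous_map X (top_of_set S) \<phi>" and c\<psi>: "continuous_map (top_of_set S) X \<psi>"
    and \<psi>\<phi>: "\<And>x. x \<in> topspace X \<Longrightarrow> \<psi> (\<phi> x) = x" and \<phi>\<psi>: "\<And>y. y \<in> S \<Longrightarrow> \<phi> (\<psi> y) = y"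
    using hm by (auto simp: homeomorphic_maps_def)
  have \<phi>S: "\<And>x. x \<in> topspace X \<Longrightarrow> \<phi> x \<in> S" using c\<phi> by (auto simp: continuous_map_def)
  have \<psi>X: "\<And>y. y \<in> S \<Longrightarrow> \<psi> y \<in> topspace X" using c\<psi> by (auto simp: continuous_map_def)
  have img: "\<phi> ` topspace X = S" using \<phi>S \<psi>X \<phi>\<psi> by (metis image_subset_iff subsetI subset_antisym imageI)
  have inj: "inj_on \<phi> (topspace X)" using \<psi>\<phi> by (metis inj_on_inverseI)
  have cs: "compact_space X" and cn: "connected_space X" and lcs: "locally_connected_space X"
    and nos: "\<not> (\<exists>T. simple_closed_curve_in X T)"
    using den by (auto simp: dendrite_def continuum_def)
  have eX: "e \<in> topspace X" and eco: "connectedin X (topspace X - {e})"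
    using ep by (auto simp: end_point_def)
  have "compactin (top_of_set S) (\<phi> ` topspace X)"
    using image_compactin[OF _ c\<phi>] cs by (simp add: compact_space_def)
  then have cpt: "compact S" using img by (simp add: compactin_subtopology)
  have "connectedin (top_of_set S) (\<phi> ` topspace X)"
    using connectedin_continuous_map_image[OF c\<phi>] cn by (simp add: connectedin_topspace)
  then have conS: "connected S" using img by (simp add: connectedin_subtopology)
  have "\<phi> ` (topspace X - {e}) = S - {\<phi> e}"
    using img inj eX by (auto simp: inj_on_def)
  moreover have "connectedin (top_of_set S) (\<phi> ` (topspace X - {e}))"
    using connectedin_continuous_map_image[OF c\<phi> eco] .
  ultimately have conSe: "connected (S - {\<phi> e})" by (simp add: connectedin_subtopology)
  have "X homeomorphic_space top_of_set S" using hm homeomorphic_space_def by blast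
  then have lc: "locally connected S"
    using lcs homeomorphic_locally_connected_space lc_transfer by blast
  have noscc: "\<not> (T homeomorphic (sphere (0::complex) 1))" if "T \<subseteq> S" for T
  proof
    assume Th: "T homeomorphic (sphere (0::complex) 1)"
    have sub: "\<psi> ` T \<subseteq> topspace X" using \<psi>X that by blast
    have e1: "topspace X \<inter> \<psi> ` T = \<psi> ` T" using sub by blast
    have "\<phi> ` \<psi> ` T = (\<lambda>y. y) ` T" unfolding image_image
      by (rule image_cong) (use \<phi>\<psi> that in auto)
    then have "\<phi> ` (topspace X \<inter> \<psi> ` T) = topspace (top_of_set S) \<inter> T"
      using e1 that by auto
    then have "homeomorphic_maps (subtopology X (\<psi> ` T)) (subtopology (top_of_set S) T) \<phi> \<psi>"
      by (rule homeomorphic_maps_subtopologies[OF hm])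
    moreover have "subtopology (top_of_set S) T = top_of_set T"
      using that by (simp add: subtopology_subtopology Int_absorb1)
    ultimately have "subtopology X (\<psi> ` T) homeomorphic_space top_of_set T"
      using homeomorphic_space_def by metis
    also have "top_of_set T homeomorphic_space top_of_set (sphere (0::complex) 1)"
      using Th hs_iff by blast
    finally have "simple_closed_curve_in X (\<psi> ` T)"
      using sub by (simp add: simple_closed_curve_in_def)
    then show False using nos by blast
  qed
  interpret dend2 S
    by unfold_locales (use cpt lc noscc conS in auto)
  obtain h' where hh': "homeomorphic_maps X X h h'" using hh homeomorphic_map_maps by blast
  have "homeomorphic_maps (top_of_set S) X (h \<circ> \<psi>) (\<phi> \<circ> h')"
    using homeomorphic_maps_compose hm hh' homeomorphic_maps_sym by metis
  then have "homeomorphic_maps (top_of_set S) (top_of_set S) (\<phi> \<circ> (h \<circ> \<psi>)) ((\<phi> \<circ> h') \<circ> \<psi>)"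
    using homeomorphic_maps_compose hm by metis
  then have g: "homeomorphism S S (\<phi> \<circ> (h \<circ> \<psi>)) ((\<phi> \<circ> h') \<circ> \<psi>)" by (simp add: hm_iff)
  have hX: "\<And>u. u \<in> topspace X \<Longrightarrow> h u \<in> topspace X"
    using hh' by (auto simp: homeomorphic_maps_def continuous_map_def)
  have ge: "(\<phi> \<circ> (h \<circ> \<psi>)) (\<phi> e) = \<phi> e" using \<psi>\<phi> eX he by simp
  have "\<phi> x \<noteq> \<phi> e" using inj x eX by (auto simp: inj_on_def)
  then obtain p where p: "p \<in> S" "p \<noteq> \<phi> e" "(\<phi> \<circ> (h \<circ> \<psi>)) p = p"
    using main_fix[OF g \<phi>S[OF eX] ge conSe \<phi>S[OF x(1)]] by blast
  have "\<psi> p \<in> topspace X" using \<psi>X p(1) by blast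
  moreover have "\<psi> p \<noteq> e" using p(1,2) \<phi>\<psi> by metis
  moreover have "h (\<psi> p) = \<psi> p"
  proof -
    have "\<phi> (h (\<psi> p)) = p" using p(3) by simp
    then have "\<psi> (\<phi> (h (\<psi> p))) = \<psi> p" by simp
    then show ?thesis using \<psi>\<phi>[OF hX[OF \<psi>X[OF p(1)]]] by simp
  qed
  ultimately show ?thesis by blast
qed

lemma continuous_on_discrete_dom: "continuous_on UNIV (f :: 'a discrete \<Rightarrow> 'b::topological_space)"
  unfolding continuous_on_open_invariant by (auto intro!: exI[of _ "f -` _"] simp: open_discrete)

theorem lemma2p1:
  fixes X :: "'a topology" and h :: "'a \<Rightarrow> 'a" and e :: 'a
  assumes "dendrite X"
    and "\<exists>x y. x \<in> topspace X \<and> y \<in> topspace X \<and> x \<noteq> y"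
    and "homeomorphic_map X X h"
    and "end_point X e"
    and "h e = e"
  shows "\<exists>p \<in> topspace X. p \<noteq> e \<and> h p = p"
proof -
  have "metrizable_space X" using assms(1) by (simp add: dendrite_def continuum_def)
  then obtain M d where Md: "Metric_space M d" and Xeq: "X = Metric_space.mtopology M d"
    by (auto simp: metrizable_space_def)
  interpret Metric_space M d by (rule Md)
  have tX: "topspace X = M" by (simp add: Xeq)
  obtain x where x: "x \<in> topspace X" "x \<noteq> e" using assms(2) by metis
  have x0: "x \<in> M" using x tX by simp
  define F where "F u = (\<lambda>z::'a discrete. if of_discrete z \<in> M then d u (of_discrete z) - d x (of_discrete z) else 0)" for u
  have Fb: "F u \<in> bcontfun" if "u \<in> M" for u
  proof (rule bcontfun_normI[OF continuous_on_discrete_dom])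
    fix z :: "'a discrete"
    show "norm (F u z) \<le> d u x"
    proof (cases "of_discrete z \<in> M")
      case True
      then have "d u (of_discrete z) \<le> d u x + d x (of_discrete z)" "d x (of_discrete z) \<le> d x u + d u (of_discrete z)"
        using that x0 triangle by blast+
      then show ?thesis using True commute[of x u] by (simp add: F_def abs_le_iff)
    qed (simp add: F_def that x0)
  qed
  define \<phi> :: "'a \<Rightarrow> ('a discrete \<Rightarrow>\<^sub>C real)" where "\<phi> u = Bcontfun (F u)" for u
  have app: "apply_bcontfun (\<phi> u) = F u" if "u \<in> M" for u
    using Fb[OF that] by (simp add: \<phi>_def Bcontfun_inverse)
  have iso: "dist (\<phi> u) (\<phi> v) = d u v" if "u \<in> M" "v \<in> M" for u v
  proof (rule antisym)
    show "dist (\<phi> u) (\<phi> v) \<le> d u v"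
    proof (rule dist_bound)
      fix z :: "'a discrete"
      show "dist (\<phi> u z) (\<phi> v z) \<le> d u v"
      proof (cases "of_discrete z \<in> M")
        case True
        then have "d u (of_discrete z) \<le> d u v + d v (of_discrete z)" "d v (of_discrete z) \<le> d v u + d u (of_discrete z)"
          using that triangle by blast+
        then show ?thesis using True commute[of v u] that by (simp add: app F_def dist_real_def abs_le_iff)
      qed (simp add: app that F_def)
    qed
    have "dist (\<phi> u (discrete v)) (\<phi> v (discrete v)) \<le> dist (\<phi> u) (\<phi> v)" by (rule dist_bounded)
    moreover have "dist (\<phi> u (discrete v)) (\<phi> v (discrete v)) = d u v"
      using that by (simp add: app F_def dist_real_def discrete_inverse)
    ultimately show "d u v \<le> dist (\<phi> u) (\<phi> v)" by simp
  qed
  have "Metric_space12 M d UNIV dist"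
    by (simp add: Metric_space12_def Md Met_TC.Metric_space_axioms)
  then have "embedding_map mtopology (Metric_space.mtopology UNIV dist) \<phi>"
    by (rule Metric_space12.isometry_imp_embedding_map) (use iso in auto)
  then have "embedding_map X euclidean \<phi>" by (simp add: Xeq)
  then have "homeomorphic_map X (top_of_set (\<phi> ` topspace X)) \<phi>" by (simp add: embedding_map_def)
  then obtain \<psi> where hm: "homeomorphic_maps X (top_of_set (\<phi> ` topspace X)) \<phi> \<psi>"
    using homeomorphic_map_maps by blast
  show ?thesis by (rule transfer_main[OF hm assms(1,4,3,5) x])
qed

end
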